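(* Let $\mathbb{D}\subset\mathbb{C}$ be the unit disc and $\mathbb{B}^n\subset\mathbb{R}^n$, $n\ge 3$, the open unit ball. Assume $f:\mathbb{D}\to\mathbb{B}^n$ is a conformal minimal immersion. Then for every $a\in\mathbb{D}$, $$\|f(a)\|\ \le\ \frac{|a|+\|f(0)\|}{1+|a|\,\|f(0)\|}.$$
   Context: A conformal minimal immersion $f=f(x,y)$, $z=x+iy$, is a harmonic immersion satisfying $\langle f_x,f_x\rangle=\langle f_y,f_y\rangle$ and $\langle f_x,f_y\rangle=0$. $\|\cdot\|$ is the Euclidean norm. *)

theory Defs
  imports "HOL-Analysis.Analysis"
begin

definition conformal_minimal_immersion ::
  "(complex \<Rightarrow> 'a::euclidean_space) \<Rightarrow> complex set \<Rightarrow> bool" where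
  "conformal_minimal_immersion f U \<longleftrightarrow> open U \<and>
    (\<exists>fx fy fxx fxy fyx fyy.
      (\<forall>z\<in>U.
         (f has_derivative (\<lambda>h. Re h *\<^sub>R fx z + Im h *\<^sub>R fy z)) (at z) \<and>
         (fx has_derivative (\<lambda>h. Re h *\<^sub>R fxx z + Im h *\<^sub>R fxy z)) (at z) \<and>
         (fy has_derivative (\<lambda>h. Re h *\<^sub>R fyx z + Im h *\<^sub>R fyy z)) (at z) \<and>
         fxx z + fyy z = 0 \<and>
         inj (\<lambda>h. Re h *\<^sub>R fx z + Im h *\<^sub>R fy z) \<and>
         inner (fx z) (fx z) = inner (fy z) (fy z) \<and>
         inner (fx z) (fy z) = 0) \<and>
      continuous_on U fxx \<and> continuous_on U fxy \<and>
      continuous_on U fyx \<and> continuous_on U fyy)"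

end

theory Submission
  imports Defs "HOL-Complex_Analysis.Complex_Analysis"
begin

lemma dir_deriv:
  fixes G :: "complex \<Rightarrow> real"
  assumes "(G has_derivative (\<lambda>h. Re h * a + Im h * b)) (at (c + of_real s * d))"
  shows "((\<lambda>s. G (c + of_real s * d)) has_real_derivative (Re d * a + Im d * b)) (at s)"
proof -
  have l: "((\<lambda>s::real. c + of_real s * d) has_derivative (\<lambda>h. of_real h * d)) (at s)"
    by (auto intro!: derivative_eq_intros)
  have "((\<lambda>s. G (c + of_real s * d)) has_derivative (\<lambda>h. Re (of_real h * d) * a + Im (of_real h * d) * b)) (at s)"
    using has_derivative_compose[OF l assms] by (simp add: o_def)
  moreover have "(\<lambda>h. Re (of_real h * d) * a + Im (of_real h * d) * b) = (*) (Re d * a + Im d * b)"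
    by (auto simp: algebra_simps)
  ultimately show ?thesis unfolding has_field_derivative_def by simp
qed

lemma clairaut:
  fixes F p q pxx pxy qx qy :: "complex \<Rightarrow> real"
  assumes U: "open U" "z \<in> U"
    and F: "\<And>w. w\<in>U \<Longrightarrow> (F has_derivative (\<lambda>h. Re h * p w + Im h * q w)) (at w)"
    and P: "\<And>w. w\<in>U \<Longrightarrow> (p has_derivative (\<lambda>h. Re h * pxx w + Im h * pxy w)) (at w)"
    and Q: "\<And>w. w\<in>U \<Longrightarrow> (q has_derivative (\<lambda>h. Re h * qx w + Im h * qy w)) (at w)"
    and cP: "continuous_on U pxy" and cQ: "continuous_on U qx"
  shows "pxy z = qx z"
proof (rule ccontr)
  assume ne: "pxy z \<noteq> qx z"
  define \<epsilon> where "\<epsilon> = \<bar>pxy z - qx z\<bar> / 2"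
  have e: "\<epsilon> > 0" using ne by (simp add: \<epsilon>_def)
  obtain \<delta> where d: "\<delta> > 0" "ball z \<delta> \<subseteq> U" using U openE by blast
  have "isCont pxy z" using cP U continuous_on_eq_continuous_at by blast
  then obtain \<delta>1 where d1: "\<delta>1 > 0" "\<And>w. dist w z < \<delta>1 \<Longrightarrow> dist (pxy w) (pxy z) < \<epsilon>"
    using e by (metis continuous_at_eps_delta)
  have "isCont qx z" using cQ U continuous_on_eq_continuous_at by blast
  then obtain \<delta>2 where d2: "\<delta>2 > 0" "\<And>w. dist w z < \<delta>2 \<Longrightarrow> dist (qx w) (qx z) < \<epsilon>"
    using e by (metis continuous_at_eps_delta)
  define m where "m = min \<delta> (min \<delta>1 \<delta>2)"
  define h where "h = m / 3"
  have m: "m > 0" using d d1 d2 by (simp add: m_def)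
  have h: "h > 0" using m by (simp add: h_def)
  have inb: "dist (z + of_real x + \<i> * of_real y) z < m" if "0 \<le> x" "x \<le> h" "0 \<le> y" "y \<le> h" for x y
  proof -
    have "dist (z + of_real x + \<i> * of_real y) z = norm (of_real x + \<i> * of_real y)"
      by (simp add: dist_norm)
    also have "\<dots> \<le> norm (of_real x :: complex) + norm (\<i> * of_real y)" by (rule norm_triangle_ineq)
    also have "\<dots> = x + y" using that by (simp add: norm_mult)
    also have "\<dots> < m" using that h_def m by linarith
    finally show ?thesis .
  qed
  have inU: "z + of_real x + \<i> * of_real y \<in> U" if "0 \<le> x" "x \<le> h" "0 \<le> y" "y \<le> h" for x y
    using inb[OF that] d(2) m_def by (auto simp: dist_commute)
  have closeP: "dist (pxy (z + of_real x + \<i> * of_real y)) (pxy z) < \<epsilon>" if "0 \<le> x" "x \<le> h" "0 \<le> y" "y \<le> h" for x y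
    using inb[OF that] d1(2) m_def by auto
  have closeQ: "dist (qx (z + of_real x + \<i> * of_real y)) (qx z) < \<epsilon>" if "0 \<le> x" "x \<le> h" "0 \<le> y" "y \<le> h" for x y
    using inb[OF that] d2(2) m_def by auto
  define \<Delta> where "\<Delta> = F (z + of_real h + \<i> * of_real h) - F (z + of_real h + \<i> * of_real 0)
     - F (z + of_real 0 + \<i> * of_real h) + F (z + of_real 0 + \<i> * of_real 0)"
  have "\<exists>\<xi>. 0 < \<xi> \<and> \<xi> < h \<and> (\<lambda>s. F ((z + \<i> * of_real h) + of_real s * 1) - F (z + of_real s * 1)) h
      - (\<lambda>s. F ((z + \<i> * of_real h) + of_real s * 1) - F (z + of_real s * 1)) 0
      = (h - 0) * (p (z + of_real \<xi> + \<i> * of_real h) - p (z + of_real \<xi> + \<i> * of_real 0))"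
  proof (rule MVT2[where f' = "\<lambda>s. p (z + of_real s + \<i> * of_real h) - p (z + of_real s + \<i> * of_real 0)", OF h])
    fix s assume s0: "0 \<le> s" "s \<le> h"
    then have s: "0 \<le> s \<and> s \<le> h" by simp
    have a: "((\<lambda>s. F ((z + \<i> * of_real h) + of_real s * 1)) has_real_derivative
       (Re 1 * p ((z + \<i> * of_real h) + of_real s * 1) + Im 1 * q ((z + \<i> * of_real h) + of_real s * 1))) (at s)"
      by (rule dir_deriv, rule F) (use inU[of s h] s h in \<open>simp add: algebra_simps\<close>)
    have b: "((\<lambda>s. F (z + of_real s * 1)) has_real_derivative
       (Re 1 * p (z + of_real s * 1) + Im 1 * q (z + of_real s * 1))) (at s)"
      by (rule dir_deriv, rule F) (use inU[of s 0] s h in \<open>simp add: algebra_simps\<close>)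
    show "((\<lambda>s. F ((z + \<i> * of_real h) + of_real s * 1) - F (z + of_real s * 1)) has_real_derivative
       (p (z + of_real s + \<i> * of_real h) - p (z + of_real s + \<i> * of_real 0))) (at s)"
      using DERIV_diff[OF a b] by (simp add: algebra_simps)
  qed
  then obtain \<xi> where xi: "0 < \<xi>" "\<xi> < h" and
    eq1: "\<Delta> = h * (p (z + of_real \<xi> + \<i> * of_real h) - p (z + of_real \<xi> + \<i> * of_real 0))"
    unfolding \<Delta>_def by (auto simp: algebra_simps)
  have "\<exists>\<eta>. 0 < \<eta> \<and> \<eta> < h \<and> (\<lambda>t. p ((z + of_real \<xi>) + of_real t * \<i>)) h
      - (\<lambda>t. p ((z + of_real \<xi>) + of_real t * \<i>)) 0 = (h - 0) * pxy (z + of_real \<xi> + \<i> * of_real \<eta>)"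
  proof (rule MVT2[where f' = "\<lambda>t. pxy (z + of_real \<xi> + \<i> * of_real t)", OF h])
    fix t assume t0: "0 \<le> t" "t \<le> h"
    then have t: "0 \<le> t \<and> t \<le> h" by simp
    have a: "((\<lambda>t. p ((z + of_real \<xi>) + of_real t * \<i>)) has_real_derivative
       (Re \<i> * pxx ((z + of_real \<xi>) + of_real t * \<i>) + Im \<i> * pxy ((z + of_real \<xi>) + of_real t * \<i>))) (at t)"
      by (rule dir_deriv, rule P) (use inU[of \<xi> t] t xi in \<open>simp add: algebra_simps\<close>)
    then show "((\<lambda>t. p ((z + of_real \<xi>) + of_real t * \<i>)) has_real_derivative pxy (z + of_real \<xi> + \<i> * of_real t)) (at t)"
      by (simp add: algebra_simps)
  qed
  then obtain \<eta> where eta: "0 < \<eta>" "\<eta> < h" and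
    eq2: "p (z + of_real \<xi> + \<i> * of_real h) - p (z + of_real \<xi> + \<i> * of_real 0) = h * pxy (z + of_real \<xi> + \<i> * of_real \<eta>)"
    by (auto simp: algebra_simps)
  have "\<exists>\<eta>. 0 < \<eta> \<and> \<eta> < h \<and> (\<lambda>t. F ((z + of_real h) + of_real t * \<i>) - F (z + of_real t * \<i>)) h
      - (\<lambda>t. F ((z + of_real h) + of_real t * \<i>) - F (z + of_real t * \<i>)) 0
      = (h - 0) * (q (z + of_real h + \<i> * of_real \<eta>) - q (z + of_real 0 + \<i> * of_real \<eta>))"
  proof (rule MVT2[where f' = "\<lambda>t. q (z + of_real h + \<i> * of_real t) - q (z + of_real 0 + \<i> * of_real t)", OF h])
    fix t assume t0: "0 \<le> t" "t \<le> h"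
    then have t: "0 \<le> t \<and> t \<le> h" by simp
    have a: "((\<lambda>t. F ((z + of_real h) + of_real t * \<i>)) has_real_derivative
       (Re \<i> * p ((z + of_real h) + of_real t * \<i>) + Im \<i> * q ((z + of_real h) + of_real t * \<i>))) (at t)"
      by (rule dir_deriv, rule F) (use inU[of h t] t h in \<open>simp add: algebra_simps\<close>)
    have b: "((\<lambda>t. F (z + of_real t * \<i>)) has_real_derivative
       (Re \<i> * p (z + of_real t * \<i>) + Im \<i> * q (z + of_real t * \<i>))) (at t)"
      by (rule dir_deriv, rule F) (use inU[of 0 t] t h in \<open>simp add: algebra_simps\<close>)
    show "((\<lambda>t. F ((z + of_real h) + of_real t * \<i>) - F (z + of_real t * \<i>)) has_real_derivative
       (q (z + of_real h + \<i> * of_real t) - q (z + of_real 0 + \<i> * of_real t))) (at t)"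
      using DERIV_diff[OF a b] by (simp add: algebra_simps)
  qed
  then obtain \<eta>' where eta': "0 < \<eta>'" "\<eta>' < h" and
    eq3: "\<Delta> = h * (q (z + of_real h + \<i> * of_real \<eta>') - q (z + of_real 0 + \<i> * of_real \<eta>'))"
    unfolding \<Delta>_def by (auto simp: algebra_simps)
  have "\<exists>\<xi>. 0 < \<xi> \<and> \<xi> < h \<and> (\<lambda>s. q ((\<i> * of_real \<eta>' + z) + of_real s * 1)) h
      - (\<lambda>s. q ((\<i> * of_real \<eta>' + z) + of_real s * 1)) 0 = (h - 0) * qx (z + of_real \<xi> + \<i> * of_real \<eta>')"
  proof (rule MVT2[where f' = "\<lambda>s. qx (z + of_real s + \<i> * of_real \<eta>')", OF h])
    fix s assume s0: "0 \<le> s" "s \<le> h"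
    then have s: "0 \<le> s \<and> s \<le> h" by simp
    have a: "((\<lambda>s. q ((\<i> * of_real \<eta>' + z) + of_real s * 1)) has_real_derivative
       (Re 1 * qx ((\<i> * of_real \<eta>' + z) + of_real s * 1) + Im 1 * qy ((\<i> * of_real \<eta>' + z) + of_real s * 1))) (at s)"
      by (rule dir_deriv, rule Q) (use inU[of s \<eta>'] s eta' in \<open>simp add: algebra_simps\<close>)
    then show "((\<lambda>s. q ((\<i> * of_real \<eta>' + z) + of_real s * 1)) has_real_derivative qx (z + of_real s + \<i> * of_real \<eta>')) (at s)"
      by (simp add: algebra_simps)
  qed
  then obtain \<xi>' where xi': "0 < \<xi>'" "\<xi>' < h" and
    eq4: "q (z + of_real h + \<i> * of_real \<eta>') - q (z + of_real 0 + \<i> * of_real \<eta>') = h * qx (z + of_real \<xi>' + \<i> * of_real \<eta>')"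
    by (auto simp: algebra_simps)
  have "h * (h * pxy (z + of_real \<xi> + \<i> * of_real \<eta>)) = \<Delta>"
    using eq1 eq2 by simp
  also have "\<dots> = h * (h * qx (z + of_real \<xi>' + \<i> * of_real \<eta>'))"
    using eq3 eq4 by simp
  finally have "h * (h * pxy (z + of_real \<xi> + \<i> * of_real \<eta>)) = h * (h * qx (z + of_real \<xi>' + \<i> * of_real \<eta>'))" .
  then have eqv: "pxy (z + of_real \<xi> + \<i> * of_real \<eta>) = qx (z + of_real \<xi>' + \<i> * of_real \<eta>')"
    using h by simp
  have "dist (pxy (z + of_real \<xi> + \<i> * of_real \<eta>)) (pxy z) < \<epsilon>"
    using closeP xi eta by simp
  moreover have "dist (qx (z + of_real \<xi>' + \<i> * of_real \<eta>')) (qx z) < \<epsilon>"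
    using closeQ xi' eta' by simp
  ultimately have "\<bar>pxy z - qx z\<bar> < 2 * \<epsilon>" using eqv by (simp add: dist_real_def)
  then show False by (simp add: \<epsilon>_def)
qed


lemma harm_holo_deriv:
  fixes p q pxx pxy qx qy :: "complex \<Rightarrow> real"
  assumes P: "(p has_derivative (\<lambda>h. Re h * pxx w + Im h * pxy w)) (at w)"
    and Q: "(q has_derivative (\<lambda>h. Re h * qx w + Im h * qy w)) (at w)"
    and sym: "pxy w = qx w" and harm: "pxx w + qy w = 0"
  shows "((\<lambda>w. of_real (p w) - \<i> * of_real (q w)) has_field_derivative (of_real (pxx w) - \<i> * of_real (qx w))) (at w)"
proof -
  have "((\<lambda>w. of_real (p w) - \<i> * of_real (q w)) has_derivative
     (\<lambda>h. of_real (Re h * pxx w + Im h * pxy w) - \<i> * of_real (Re h * qx w + Im h * qy w))) (at w)"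
    by (rule has_derivative_diff[OF has_derivative_of_real[OF P] has_derivative_mult_right[OF has_derivative_of_real[OF Q]]])
  moreover have "(\<lambda>h. of_real (Re h * pxx w + Im h * pxy w) - \<i> * of_real (Re h * qx w + Im h * qy w))
     = (*) (of_real (pxx w) - \<i> * of_real (qx w))"
  proof
    fix h :: complex
    have qy: "qy w = - pxx w" using harm by simp
    show "of_real (Re h * pxx w + Im h * pxy w) - \<i> * of_real (Re h * qx w + Im h * qy w)
       = (of_real (pxx w) - \<i> * of_real (qx w)) * h"
      by (simp add: complex_eq_iff sym qy algebra_simps)
  qed
  ultimately show ?thesis unfolding has_field_derivative_def by simp
qed

lemma harm_primitive:
  fixes F p q pxx pxy qx qy :: "complex \<Rightarrow> real"
  assumes U: "open U" "convex U" "0 \<in> U"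
    and F: "\<And>w. w\<in>U \<Longrightarrow> (F has_derivative (\<lambda>h. Re h * p w + Im h * q w)) (at w)"
    and P: "\<And>w. w\<in>U \<Longrightarrow> (p has_derivative (\<lambda>h. Re h * pxx w + Im h * pxy w)) (at w)"
    and Q: "\<And>w. w\<in>U \<Longrightarrow> (q has_derivative (\<lambda>h. Re h * qx w + Im h * qy w)) (at w)"
    and cP: "continuous_on U pxy" and cQ: "continuous_on U qx"
    and harm: "\<And>w. w\<in>U \<Longrightarrow> pxx w + qy w = 0"
  obtains H where "\<And>w. w\<in>U \<Longrightarrow> (H has_field_derivative (of_real (p w) - \<i> * of_real (q w))) (at w)"
    "\<And>w. w\<in>U \<Longrightarrow> F w = F 0 + Re (H w)"
proof -
  define g where "g = (\<lambda>w. of_real (p w) - \<i> * of_real (q w))"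
  have gd: "(g has_field_derivative (of_real (pxx w) - \<i> * of_real (qx w))) (at w)" if "w \<in> U" for w
    unfolding g_def
  proof (rule harm_holo_deriv[where pxx=pxx and pxy=pxy and qx=qx and qy=qy and w=w, OF P[OF that] Q[OF that] _ harm[OF that]])
    show "pxy w = qx w"
      using clairaut[OF U(1) that F P Q cP cQ] .
  qed
  have hol: "g holomorphic_on U"
    unfolding holomorphic_on_def using gd field_differentiable_at_within field_differentiable_def by blast
  obtain H0 where H0: "\<And>x. x \<in> U \<Longrightarrow> (H0 has_field_derivative g x) (at x within U)"
    using holomorphic_convex_primitive'[OF U(2) U(1) hol] by metis
  have H0': "(H0 has_field_derivative g x) (at x)" if "x \<in> U" for x
    using H0[OF that] at_within_open[OF that U(1)] by metis
  have "((\<lambda>w. F w - Re (H0 w)) has_derivative (\<lambda>h. 0)) (at x within U)" if "x \<in> U" for x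
  proof -
    have d: "((\<lambda>w. F w - Re (H0 w)) has_derivative (\<lambda>h. (Re h * p x + Im h * q x) - Re (h * g x))) (at x)"
    proof -
      have a: "(H0 has_derivative (\<lambda>h. g x * h)) (at x)" using H0'[OF that] unfolding has_field_derivative_def .
      have b: "((\<lambda>w. Re (H0 w)) has_derivative (\<lambda>h. Re (g x * h))) (at x)"
        using has_derivative_Re[OF a] .
      show ?thesis using has_derivative_diff[OF F[OF that] b] by (simp add: mult.commute)
    qed
    have "(\<lambda>h. (Re h * p x + Im h * q x) - Re (h * g x)) = (\<lambda>h. 0)"
      by (rule ext) (simp add: g_def)
    then have "((\<lambda>w. F w - Re (H0 w)) has_derivative (\<lambda>h. 0)) (at x)" using d by metis
    then show ?thesis by (rule has_derivative_at_withinI)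
  qed
  then obtain c where c: "\<forall>x\<in>U. F x - Re (H0 x) = c"
    using has_derivative_zero_constant[OF U(2), of "\<lambda>w. F w - Re (H0 w)"] by (metis (no_types, lifting))
  show ?thesis
  proof
    fix w assume w: "w \<in> U"
    show "((\<lambda>w. H0 w - H0 0) has_field_derivative (of_real (p w) - \<i> * of_real (q w))) (at w)"
      using DERIV_diff[OF H0'[OF w] DERIV_const[of "H0 0" "at w"]] by (simp add: g_def)
    have "F w - Re (H0 w) = F 0 - Re (H0 0)" using c w U(3) by simp
    then show "F w = F 0 + Re (H0 w - H0 0)" by simp
  qed
qed


definition EE :: "real \<Rightarrow> complex" where "EE t = exp (2 * of_real pi * \<i> * of_real t)"

lemma EE_nz [simp]: "EE t \<noteq> 0" by (simp add: EE_def)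
lemma norm_EE [simp]: "norm (EE t) = 1" by (simp add: EE_def norm_exp_eq_Re)
lemma cnj_EE: "cnj (EE t) = 1 / EE t"
  by (simp add: EE_def exp_cnj exp_minus divide_inverse)

lemma has_integral_eq_val:
  "(f has_integral I) S \<Longrightarrow> (\<And>x. x\<in>S \<Longrightarrow> f x = g x) \<Longrightarrow> I = J \<Longrightarrow> (g has_integral J) S"
  using has_integral_eq by blast

lemma circ_setup:
  assumes hol: "\<phi> holomorphic_on ball 0 1" and r: "0 < r" "r < (1::real)"
  shows "\<phi> holomorphic_on cball 0 r" "path_image (circlepath 0 r) \<subseteq> ball 0 1"
  using r by (auto intro: holomorphic_on_subset[OF hol])

lemma contour_to_integral:
  assumes "(g has_contour_integral I) (circlepath 0 (r::real))"
  shows "((\<lambda>t. g (r * EE t) * (2 * pi * \<i> * r * EE t)) has_integral I) {0..1}"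
proof -
  have "((\<lambda>x. g (circlepath 0 r x) * vector_derivative (circlepath 0 r) (at x within {0..1})) has_integral I) {0..1}"
    using assms unfolding has_contour_integral_def .
  then show ?thesis
    apply (rule has_integral_eq[rotated])
    apply (subst vector_derivative_circlepath01)
      apply auto[2]
    apply (simp add: circlepath EE_def)
    done
qed

lemma circ_mean:
  assumes hol: "\<phi> holomorphic_on ball 0 1" and r: "0 < r" "r < (1::real)"
  shows "((\<lambda>t. \<phi> (r * EE t)) has_integral \<phi> 0) {0..1}"
proof -
  have "((\<lambda>u. \<phi> u / (u - 0)) has_contour_integral (2 * of_real pi * \<i> * \<phi> 0)) (circlepath 0 r)"
    by (rule Cauchy_integral_circlepath_simple) (use circ_setup[OF assms] r in auto)
  from contour_to_integral[OF this]
  have "((\<lambda>t. (2 * pi * \<i>) * \<phi> (r * EE t)) has_integral (2 * pi * \<i>) * \<phi> 0) {0..1}"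
    by (rule has_integral_eq_val) (use r in simp_all)
  from has_integral_mult_right[OF this, of "1 / (2 * pi * \<i>)"]
  show ?thesis by simp
qed

lemma circ_first:
  assumes hol: "\<phi> holomorphic_on ball 0 1" and r: "0 < r" "r < (1::real)"
  shows "((\<lambda>t. \<phi> (r * EE t) / EE t) has_integral (r * deriv \<phi> 0)) {0..1}"
proof -
  have "((\<lambda>u. \<phi> u / (u - 0) ^ Suc 1) has_contour_integral ((2 * pi * \<i>) / fact 1 * (deriv ^^ 1) \<phi> 0)) (circlepath 0 r)"
    by (rule Cauchy_has_contour_integral_higher_derivative_circlepath)
       (use circ_setup[OF assms] r in \<open>auto intro: holomorphic_on_imp_continuous_on\<close>)
  from contour_to_integral[OF this]
  have "((\<lambda>t. (2 * pi * \<i> / r) * (\<phi> (r * EE t) / EE t)) has_integral (2 * pi * \<i> / r) * (r * deriv \<phi> 0)) {0..1}"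
    by (rule has_integral_eq_val) (use r in \<open>simp_all add: power2_eq_square field_simps\<close>)
  from has_integral_mult_right[OF this, of "r / (2 * pi * \<i>)"]
  show ?thesis by (rule has_integral_eq_val) (use r in \<open>auto simp: field_simps\<close>)
qed

lemma circ_zero:
  assumes hol: "\<phi> holomorphic_on ball 0 1" and r: "0 < r" "r < (1::real)"
  shows "((\<lambda>t. \<phi> (r * EE t) * EE t) has_integral 0) {0..1}"
proof -
  have "(\<phi> has_contour_integral 0) (circlepath 0 r)"
    by (rule Cauchy_theorem_disc_simple[OF hol]) (use circ_setup[OF assms] in auto)
  from contour_to_integral[OF this]
  have "((\<lambda>t. (2 * pi * \<i> * r) * (\<phi> (r * EE t) * EE t)) has_integral (2 * pi * \<i> * r) * 0) {0..1}"
    by (rule has_integral_eq_val) (simp_all add: algebra_simps)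
  from has_integral_mult_right[OF this, of "1 / (2 * pi * \<i> * r)"]
  show ?thesis using r by simp
qed

lemma re_mult_re: "Re X * Re Y = Re ((X * Y + X * cnj Y) / 2)"
  by (simp add: algebra_simps)

lemma has_integral_Re:
  "(f has_integral I) S \<Longrightarrow> ((\<lambda>x. Re (f x)) has_integral Re I) S"
  using has_integral_linear[OF _ bounded_linear_Re] by (simp add: o_def)

lemma avg_re_trig:
  assumes hol: "\<phi> holomorphic_on ball 0 1" and r: "0 < r" "r < (1::real)"
  shows "((\<lambda>t. Re (\<phi> (r * EE t)) * Re (cnj u * EE t)) has_integral (r / 2 * Re (u * deriv \<phi> 0))) {0..1}"
proof -
  have a: "((\<lambda>t. cnj u * (\<phi> (r * EE t) * EE t)) has_integral cnj u * 0) {0..1}"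
    by (rule has_integral_mult_right[OF circ_zero[OF assms]])
  have b: "((\<lambda>t. u * (\<phi> (r * EE t) / EE t)) has_integral u * (r * deriv \<phi> 0)) {0..1}"
    by (rule has_integral_mult_right[OF circ_first[OF assms]])
  have c: "((\<lambda>t. (cnj u * (\<phi> (r * EE t) * EE t) + u * (\<phi> (r * EE t) / EE t)) / 2) has_integral
     (cnj u * 0 + u * (r * deriv \<phi> 0)) / 2) {0..1}"
    using has_integral_mult_left[OF has_integral_add[OF a b], of "1/2"] by simp
  from has_integral_Re[OF c] show ?thesis
  proof (rule has_integral_eq_val)
    fix t :: real
    show "Re ((cnj u * (\<phi> (r * EE t) * EE t) + u * (\<phi> (r * EE t) / EE t)) / 2) =
        Re (\<phi> (r * EE t)) * Re (cnj u * EE t)"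
      unfolding re_mult_re by (simp add: cnj_EE algebra_simps)
  qed (simp add: field_simps)
qed

lemma avg_re_const:
  assumes hol: "\<phi> holomorphic_on ball 0 1" and r: "0 < r" "r < (1::real)"
  shows "((\<lambda>t. Re (\<phi> (r * EE t))) has_integral Re (\<phi> 0)) {0..1}"
  using has_integral_Re[OF circ_mean[OF assms]] .

lemma avg_trig:
  shows "((\<lambda>t. Re (cnj u * EE t)) has_integral 0) {0..1}"
proof -
  have "(\<lambda>z. cnj u) holomorphic_on ball 0 1" by simp
  from has_integral_Re[OF circ_zero[OF this, of "1/2"]] show ?thesis by simp
qed


lemma pw_ineq:
  fixes s C S X Y :: real
  assumes "0 \<le> s" "s < 1" "C\<^sup>2 + S\<^sup>2 = 1" "X\<^sup>2 + Y\<^sup>2 \<le> 1"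
  shows "(2* s + (1+s\<^sup>2)*C) * X + (1 - s\<^sup>2) * S * Y \<le> 1 + s\<^sup>2 + 2* s*C"
proof -
  define \<alpha> where "\<alpha> = 2* s + (1+s\<^sup>2)*C"
  define \<beta> where "\<beta> = (1 - s\<^sup>2) * S"
  define K where "K = 1 + s\<^sup>2 + 2* s*C"
  have C1: "C \<ge> -1"
  proof -
    have "C\<^sup>2 \<le> 1" using assms(3) by (smt (verit) zero_le_power2)
    then show ?thesis using abs_le_square_iff[of C 1] by simp
  qed
  have K0: "K \<ge> 0"
  proof -
    have "K = (1 - s)\<^sup>2 + 2* s*(1 + C)" by (simp add: K_def power2_eq_square algebra_simps)
    also have "\<dots> \<ge> 0" using assms(1) C1 by (intro add_nonneg_nonneg) auto
    finally show ?thesis .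
  qed
  have id: "\<alpha>\<^sup>2 + \<beta>\<^sup>2 = K\<^sup>2"
  proof -
    have "S\<^sup>2 = 1 - C\<^sup>2" using assms(3) by simp
    then have "\<beta>\<^sup>2 = (1 - s\<^sup>2)\<^sup>2 * (1 - C\<^sup>2)" unfolding \<beta>_def by (simp add: power_mult_distrib)
    then show ?thesis unfolding \<alpha>_def K_def by (simp add: power2_eq_square algebra_simps)
  qed
  have cs: "(\<alpha>*X + \<beta>*Y)\<^sup>2 \<le> (\<alpha>\<^sup>2 + \<beta>\<^sup>2) * (X\<^sup>2 + Y\<^sup>2)"
  proof -
    have "(\<alpha>\<^sup>2 + \<beta>\<^sup>2) * (X\<^sup>2 + Y\<^sup>2) - (\<alpha>*X + \<beta>*Y)\<^sup>2 = (\<alpha>*Y - \<beta>*X)\<^sup>2"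
      by (simp add: power2_eq_square algebra_simps)
    then show ?thesis by (smt (verit) zero_le_power2)
  qed
  also have "\<dots> \<le> K\<^sup>2" using id assms(4) by (metis mult_left_le zero_le_power2 add_nonneg_nonneg mult.right_neutral)
  finally have "(\<alpha>*X + \<beta>*Y)\<^sup>2 \<le> K\<^sup>2" .
  then have "\<alpha>*X + \<beta>*Y \<le> K" using K0 abs_le_square_iff[of "\<alpha>*X + \<beta>*Y" K] by simp
  then show ?thesis unfolding \<alpha>_def \<beta>_def K_def by (simp add: mult.assoc)
qed


lemma key2d:
  fixes \<phi>e \<phi>d :: "complex \<Rightarrow> complex" and s :: real and u :: complex
  assumes hole: "\<phi>e holomorphic_on ball 0 1" and hold: "\<phi>d holomorphic_on ball 0 1"
    and e0: "\<phi>e 0 = 0" and s: "0 \<le> s" "s < 1" and u: "norm u = 1"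
    and bound: "\<And>w. w \<in> ball 0 1 \<Longrightarrow> (s + Re (\<phi>e w))\<^sup>2 + (Re (\<phi>d w))\<^sup>2 \<le> 1"
  shows "(1+s\<^sup>2) * Re (u * deriv \<phi>e 0) + (1-s\<^sup>2) * Re (\<i> * u * deriv \<phi>d 0) \<le> 2*(1-s\<^sup>2)"
proof -
  define A where "A = Re (u * deriv \<phi>e 0)"
  define B where "B = Re (\<i> * u * deriv \<phi>d 0)"
  define X0 where "X0 = (1+s\<^sup>2) * A + (1-s\<^sup>2) * B"
  have step: "r * X0 \<le> 2*(1-s\<^sup>2)" if r: "0 < r" "r < (1::real)" for r
  proof -
    define C where "C t = Re (cnj u * EE t)" for t
    define S where "S t = Re (cnj (\<i> * u) * EE t)" for t
    have I1: "((\<lambda>t. Re (\<phi>e (r * EE t))) has_integral 0) {0..1}"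
      using avg_re_const[OF hole r] e0 by simp
    have I2: "((\<lambda>t. Re (\<phi>e (r * EE t)) * C t) has_integral (r / 2 * A)) {0..1}"
      unfolding C_def A_def by (rule avg_re_trig[OF hole r])
    have I3: "((\<lambda>t. Re (\<phi>d (r * EE t)) * S t) has_integral (r / 2 * B)) {0..1}"
      unfolding S_def B_def by (rule avg_re_trig[OF hold r])
    have I4: "((\<lambda>t. C t) has_integral 0) {0..1}"
      unfolding C_def by (rule avg_trig)
    have I5: "((\<lambda>t::real. 2* s* s) has_integral 2* s* s) {0..1}"
      using has_integral_const_real[of "2* s* s" 0 1] by simp
    have Itheta: "((\<lambda>t. 2* s* s + 2* s * Re (\<phi>e (r * EE t)) + (1+s\<^sup>2)* s * C t
        + (1+s\<^sup>2) * (Re (\<phi>e (r * EE t)) * C t) + (1-s\<^sup>2) * (Re (\<phi>d (r * EE t)) * S t))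
       has_integral (2* s* s + 2* s*0 + (1+s\<^sup>2)* s*0 + (1+s\<^sup>2) * (r / 2 * A)
         + (1-s\<^sup>2) * (r / 2 * B))) {0..1}"
      by (intro has_integral_add has_integral_mult_right I1 I2 I3 I4 I5)
    have Ipsi: "((\<lambda>t. (1 + s\<^sup>2) + 2* s * C t) has_integral ((1 + s\<^sup>2) + 2* s*0)) {0..1}"
      using has_integral_add[OF has_integral_const_real[of "1+s\<^sup>2" "0::real" 1] has_integral_mult_right[OF I4, of "2* s"]]
      by simp
    have le: "2* s* s + 2* s * Re (\<phi>e (r * EE t)) + (1+s\<^sup>2)* s * C t
        + (1+s\<^sup>2) * (Re (\<phi>e (r * EE t)) * C t) + (1-s\<^sup>2) * (Re (\<phi>d (r * EE t)) * S t)
        \<le> (1 + s\<^sup>2) + 2* s * C t" for t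
    proof -
      have CS: "(C t)\<^sup>2 + (S t)\<^sup>2 = 1"
      proof -
        have "S t = Im (cnj u * EE t)" unfolding S_def by simp
        then have "(C t)\<^sup>2 + (S t)\<^sup>2 = (norm (cnj u * EE t))\<^sup>2"
          unfolding C_def by (simp add: cmod_power2)
        also have "\<dots> = 1" using u by (simp add: norm_mult)
        finally show ?thesis .
      qed
      have w: "r * EE t \<in> ball 0 1" using r by (simp add: norm_mult)
      have "(2* s + (1+s\<^sup>2)*C t) * (s + Re (\<phi>e (r * EE t))) + (1 - s\<^sup>2) * S t * Re (\<phi>d (r * EE t))
          \<le> 1 + s\<^sup>2 + 2* s*C t"
        by (rule pw_ineq[OF s CS bound[OF w]])
      then show ?thesis by (simp add: algebra_simps power2_eq_square)
    qed
    have "2* s* s + 2* s*0 + (1+s\<^sup>2)* s*0 + (1+s\<^sup>2) * (r / 2 * A)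
         + (1-s\<^sup>2) * (r / 2 * B) \<le> (1 + s\<^sup>2) + 2* s*0"
      by (rule has_integral_le[OF Itheta Ipsi le])
    moreover have "r * X0 = 2 * ((1+s\<^sup>2) * (r / 2 * A) + (1-s\<^sup>2) * (r / 2 * B))"
      unfolding X0_def by (simp add: field_simps)
    ultimately show ?thesis by (simp add: power2_eq_square)
  qed
  show ?thesis
  proof (rule ccontr)
    assume "\<not> ?thesis"
    then have gt: "X0 > 2*(1-s\<^sup>2)" unfolding X0_def A_def B_def by simp
    have B: "2*(1-s\<^sup>2) > 0" using s abs_square_less_1[of s] by simp
    have X0p: "X0 > 0" using gt B by linarith
    define r where "r = (1 + 2*(1-s\<^sup>2) / X0) / 2"
    have q: "2*(1-s\<^sup>2) / X0 < 1" using gt X0p by simp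
    have q0: "2*(1-s\<^sup>2) / X0 > 0" using B X0p by simp
    have r0: "0 < r" "r < 1" using q q0 unfolding r_def by simp_all
    have "r * X0 = (X0 + 2*(1-s\<^sup>2)) / 2" using X0p by (simp add: r_def field_simps)
    also have "\<dots> > 2*(1-s\<^sup>2)" using gt by simp
    finally show False using step[OF r0] by simp
  qed
qed


lemma bessel_orth2:
  fixes D Dp e :: "'a::real_inner"
  assumes e: "norm e = 1" and nD: "norm D = norm Dp" and o: "inner D Dp = 0"
  shows "(inner e D)\<^sup>2 + (inner e Dp)\<^sup>2 \<le> (norm D)\<^sup>2"
proof -
  define A where "A = (inner e D)\<^sup>2 + (inner e Dp)\<^sup>2"
  define x where "x = inner e D *\<^sub>R D + inner e Dp *\<^sub>R Dp"
  have ex: "inner e x = A" by (simp add: x_def A_def inner_add_right power2_eq_square)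
  have nx: "(norm x)\<^sup>2 = A * (norm D)\<^sup>2"
  proof -
    have "(norm x)\<^sup>2 = inner x x" by (simp add: power2_norm_eq_inner)
    also have "\<dots> = (inner e D)\<^sup>2 * inner D D + (inner e Dp)\<^sup>2 * inner Dp Dp"
      using o by (simp add: x_def inner_add_left inner_add_right inner_commute power2_eq_square algebra_simps)
    also have "\<dots> = A * (norm D)\<^sup>2" using nD
      by (simp add: A_def power2_norm_eq_inner[symmetric] algebra_simps)
    finally show ?thesis .
  qed
  have "A\<^sup>2 \<le> (norm e)\<^sup>2 * (norm x)\<^sup>2"
    using Cauchy_Schwarz_ineq[of e x] ex by (simp add: power2_norm_eq_inner)
  then have "A\<^sup>2 \<le> A * (norm D)\<^sup>2" using e nx by simp
  moreover have "A \<ge> 0" by (simp add: A_def)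
  ultimately have "A \<le> (norm D)\<^sup>2"
    by (cases "A = 0") (auto simp: power2_eq_square)
  then show ?thesis by (simp add: A_def)
qed

lemma bessel_ed:
  fixes F e d :: "'a::real_inner"
  assumes e: "norm e = 1" and de: "inner d e = 0" and d: "norm d \<le> 1"
  shows "(inner e F)\<^sup>2 + (inner d F)\<^sup>2 \<le> (norm F)\<^sup>2"
proof -
  define G where "G = F - inner e F *\<^sub>R e"
  have ee: "inner e e = 1" using e by (simp add: power2_norm_eq_inner[symmetric])
  have "inner G G = inner F F - (inner e F)\<^sup>2"
    unfolding G_def inner_diff_left inner_diff_right inner_scaleR_left inner_scaleR_right ee
    by (simp add: inner_commute[of F e] power2_eq_square)
  then have nG: "(norm G)\<^sup>2 = (norm F)\<^sup>2 - (inner e F)\<^sup>2"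
    by (simp add: power2_norm_eq_inner)
  have dG: "inner d F = inner d G" by (simp add: G_def inner_diff_right de)
  have "(inner d G)\<^sup>2 \<le> (norm d)\<^sup>2 * (norm G)\<^sup>2"
    using Cauchy_Schwarz_ineq[of d G] by (simp add: power2_norm_eq_inner)
  also have "\<dots> \<le> (norm G)\<^sup>2"
    using d by (simp add: mult_left_le_one_le power_le_one)
  finally show ?thesis using nG dG by simp
qed

lemma choose_d:
  fixes e D Dp :: "'a::real_inner"
  assumes e: "norm e = 1" and nD: "norm D = norm Dp" and o: "inner D Dp = 0"
  obtains d where "inner d e = 0" "norm d \<le> 1" "inner e D \<le> inner d Dp"
proof -
  define W where "W = Dp - inner e Dp *\<^sub>R e"
  have ee: "inner e e = 1" using e by (simp add: power2_norm_eq_inner[symmetric])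
  have We: "inner W e = 0"
    unfolding W_def inner_diff_left inner_scaleR_left ee by (simp add: inner_commute[of Dp e])
  have WW: "inner W W = inner Dp Dp - (inner e Dp)\<^sup>2"
    unfolding W_def inner_diff_left inner_diff_right inner_scaleR_left inner_scaleR_right ee
    by (simp add: inner_commute[of Dp e] power2_eq_square)
  have WDp': "inner W Dp = inner Dp Dp - (inner e Dp)\<^sup>2"
    unfolding W_def inner_diff_left inner_scaleR_left
    by (simp add: inner_commute[of Dp e] power2_eq_square)
  have WDp: "inner W Dp = (norm W)\<^sup>2" using WW WDp' by (simp add: power2_norm_eq_inner)
  have nW: "(norm W)\<^sup>2 = (norm Dp)\<^sup>2 - (inner e Dp)\<^sup>2" using WW by (simp add: power2_norm_eq_inner)
  have b: "(inner e D)\<^sup>2 \<le> (norm W)\<^sup>2" using bessel_orth2[OF e nD o] nW nD by simp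
  show ?thesis
  proof (cases "W = 0")
    case True
    then have "inner e D = 0" using b by simp
    then show ?thesis by (intro that[of 0]) auto
  next
    case False
    define d where "d = W /\<^sub>R norm W"
    have "inner d e = 0" by (simp add: d_def We)
    moreover have "norm d \<le> 1" using False by (simp add: d_def)
    moreover have "inner d Dp = norm W"
      using False WDp by (simp add: d_def power2_eq_square)
    moreover have "inner e D \<le> norm W"
    proof -
      have "\<bar>inner e D\<bar> \<le> \<bar>norm W\<bar>" using b abs_le_square_iff by blast
      then show ?thesis by simp
    qed
    ultimately show ?thesis by (intro that[of d]) auto
  qed
qed


lemma moebius_facts:
  fixes z0 :: complex
  assumes z0: "norm z0 < 1"
  defines "M \<equiv> Moebius_function 0 (-z0)"
  shows "M holomorphic_on ball 0 1" "\<And>w. w \<in> ball 0 1 \<Longrightarrow> M w \<in> ball 0 1" "M 0 = z0"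
    "(M has_field_derivative (of_real (1 - (norm z0)\<^sup>2))) (at 0)"
proof -
  show "M holomorphic_on ball 0 1" unfolding M_def by (rule Moebius_function_holomorphic) (use z0 in simp)
  show "\<And>w. w \<in> ball 0 1 \<Longrightarrow> M w \<in> ball 0 1"
    unfolding M_def using Moebius_function_norm_lt_1 z0 by (simp add: dist_norm)
  show "M 0 = z0" unfolding M_def by (simp add: Moebius_function_of_zero)
  have "((\<lambda>w. (w + z0) / (1 + cnj z0 * w)) has_field_derivative (1 - z0 * cnj z0)) (at 0)"
    by (auto intro!: derivative_eq_intros)
  moreover have "1 - z0 * cnj z0 = of_real (1 - (norm z0)\<^sup>2)"
    by (simp only: of_real_diff of_real_1 complex_norm_square)
  moreover have "M = (\<lambda>w. (w + z0) / (1 + cnj z0 * w))"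
    unfolding M_def by (simp add: Moebius_function_simple[abs_def])
  ultimately show "(M has_field_derivative (of_real (1 - (norm z0)\<^sup>2))) (at 0)" by simp
qed

lemma pointwise:
  fixes f fx fy :: "complex \<Rightarrow> real^'n" and H :: "'n \<Rightarrow> complex \<Rightarrow> complex"
  assumes H: "\<And>i w. w \<in> ball 0 1 \<Longrightarrow> (H i has_field_derivative (of_real (fx w $ i) - \<i> * of_real (fy w $ i))) (at w)"
    and fH: "\<And>i w. w \<in> ball 0 1 \<Longrightarrow> f w $ i = f 0 $ i + Re (H i w)"
    and conf1: "inner (fx z0) (fx z0) = inner (fy z0) (fy z0)" and conf2: "inner (fx z0) (fy z0) = 0"
    and img: "\<And>w. w \<in> ball 0 1 \<Longrightarrow> norm (f w) < 1"
    and z0: "norm z0 < 1" and u: "norm u = 1"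
  shows "inner (f z0) (Re u *\<^sub>R fx z0 + Im u *\<^sub>R fy z0) * (1 - (norm z0)\<^sup>2) \<le> norm (f z0) * (1 - (norm (f z0))\<^sup>2)"
proof -
  define s where "s = norm (f z0)"
  define D where "D = Re u *\<^sub>R fx z0 + Im u *\<^sub>R fy z0"
  define Dp where "Dp = Re u *\<^sub>R fy z0 - Im u *\<^sub>R fx z0"
  define k where "k = 1 - (norm z0)\<^sup>2"
  have z0b: "z0 \<in> ball 0 1" using z0 by simp
  have s0: "0 \<le> s" and s1: "s < 1" using img[OF z0b] by (auto simp: s_def)
  have k0: "k > 0" using z0 abs_square_less_1[of "norm z0"] by (simp add: k_def)
  show ?thesis
  proof (cases "s = 0")
    case True
    then have "f z0 = 0" by (simp add: s_def)
    then show ?thesis by simp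
  next
    case False
    then have sp: "s > 0" using s0 by simp
    define e where "e = f z0 /\<^sub>R s"
    have ne: "norm e = 1" using sp by (simp add: e_def s_def)
    have fz0: "f z0 = s *\<^sub>R e" using sp by (simp add: e_def)
    have ee: "inner e e = 1" using ne by (simp add: power2_norm_eq_inner[symmetric])
    have DD: "inner D D = inner Dp Dp"
      unfolding D_def Dp_def inner_add_left inner_add_right inner_diff_left inner_diff_right
        inner_scaleR_left inner_scaleR_right
      using conf1 conf2 by (simp add: inner_commute[of "fy z0" "fx z0"] algebra_simps)
    have nD: "norm D = norm Dp" using DD by (simp add: norm_eq_sqrt_inner)
    have o: "inner D Dp = 0"
      unfolding D_def Dp_def inner_add_left inner_add_right inner_diff_left inner_diff_right
        inner_scaleR_left inner_scaleR_right
      using conf1 conf2 by (simp add: inner_commute[of "fy z0" "fx z0"] algebra_simps)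
    obtain d where de: "inner d e = 0" and nd: "norm d \<le> 1" and PQ: "inner e D \<le> inner d Dp"
      using choose_d[OF ne nD o] by blast
    define M where "M = Moebius_function 0 (-z0)"
    note Mf = moebius_facts[OF z0, folded M_def]
    define g where "g i = of_real (fx z0 $ i) - \<i> * of_real (fy z0 $ i)" for i
    have Hhol: "H i holomorphic_on ball 0 1" for i
      unfolding holomorphic_on_def
      using H field_differentiable_at_within field_differentiable_def by blast
    have HMhol: "(\<lambda>w. H i (M w)) holomorphic_on ball 0 1" for i
    proof -
      have "M ` ball 0 1 \<subseteq> ball 0 1" using Mf(2) by blast
      then show ?thesis using holomorphic_on_compose_gen[OF Mf(1) Hhol[of i]] by (simp add: o_def)
    qed
    have HMd: "((\<lambda>w. H i (M w)) has_field_derivative (g i * of_real k)) (at 0)" for i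
      using DERIV_chain2[OF H[of z0 i, folded Mf(3)] Mf(4)] z0b Mf(3) by (simp add: g_def k_def)
    define \<phi>e where "\<phi>e w = (\<Sum>i\<in>UNIV. of_real (e $ i) * (H i (M w) - H i z0))" for w
    define \<phi>d where "\<phi>d w = (\<Sum>i\<in>UNIV. of_real (d $ i) * (H i (M w) - H i z0))" for w
    have hole: "\<phi>e holomorphic_on ball 0 1"
      unfolding \<phi>e_def[abs_def] by (intro holomorphic_intros HMhol)
    have hold: "\<phi>d holomorphic_on ball 0 1"
      unfolding \<phi>d_def[abs_def] by (intro holomorphic_intros HMhol)
    have e0: "\<phi>e 0 = 0" by (simp add: \<phi>e_def Mf(3))
    have dere: "(\<phi>e has_field_derivative (\<Sum>i\<in>UNIV. of_real (e $ i) * (g i * of_real k))) (at 0)"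
      unfolding \<phi>e_def[abs_def] by (auto intro!: derivative_eq_intros HMd sum.cong simp: mult.commute)
    have derd: "(\<phi>d has_field_derivative (\<Sum>i\<in>UNIV. of_real (d $ i) * (g i * of_real k))) (at 0)"
      unfolding \<phi>d_def[abs_def] by (auto intro!: derivative_eq_intros HMd sum.cong simp: mult.commute)
    have ReP: "Re (u * deriv \<phi>e 0) = k * inner e D"
    proof -
      have "Re (u * deriv \<phi>e 0) = (\<Sum>i\<in>UNIV. Re (u * (of_real (e $ i) * (g i * of_real k))))"
        by (simp add: DERIV_imp_deriv[OF dere] sum_distrib_left Re_sum)
      also have "\<dots> = (\<Sum>i\<in>UNIV. k * (e $ i * D $ i))"
        by (rule sum.cong) (auto simp: g_def D_def algebra_simps)
      also have "\<dots> = k * inner e D" by (simp add: inner_vec_def sum_distrib_left)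
      finally show ?thesis .
    qed
    have ReQ: "Re (\<i> * u * deriv \<phi>d 0) = k * inner d Dp"
    proof -
      have "Re (\<i> * u * deriv \<phi>d 0) = (\<Sum>i\<in>UNIV. Re (\<i> * u * (of_real (d $ i) * (g i * of_real k))))"
        by (simp add: DERIV_imp_deriv[OF derd] sum_distrib_left Re_sum)
      also have "\<dots> = (\<Sum>i\<in>UNIV. k * (d $ i * Dp $ i))"
        by (rule sum.cong) (auto simp: g_def Dp_def algebra_simps)
      also have "\<dots> = k * inner d Dp" by (simp add: inner_vec_def sum_distrib_left)
      finally show ?thesis .
    qed
    have bound: "(s + Re (\<phi>e w))\<^sup>2 + (Re (\<phi>d w))\<^sup>2 \<le> 1" if w: "w \<in> ball 0 1" for w
    proof -
      define Fv where "Fv = f (M w)"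
      have Mw: "M w \<in> ball 0 1" using Mf(2)[OF w] .
      have comp: "Re (H i (M w) - H i z0) = Fv $ i - f z0 $ i" for i
        using fH[OF Mw, of i] fH[OF z0b, of i] by (simp add: Fv_def)
      have "Re (\<phi>e w) = (\<Sum>i\<in>UNIV. e $ i * (Fv $ i - f z0 $ i))"
        by (simp add: \<phi>e_def Re_sum comp[symmetric])
      also have "\<dots> = inner e Fv - inner e (f z0)"
        by (simp add: inner_vec_def sum_subtractf algebra_simps)
      also have "inner e (f z0) = s" using ee by (simp add: fz0)
      finally have Xe: "s + Re (\<phi>e w) = inner e Fv" by simp
      have "Re (\<phi>d w) = (\<Sum>i\<in>UNIV. d $ i * (Fv $ i - f z0 $ i))"
        by (simp add: \<phi>d_def Re_sum comp[symmetric])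
      also have "\<dots> = inner d Fv - inner d (f z0)"
        by (simp add: inner_vec_def sum_subtractf algebra_simps)
      also have "inner d (f z0) = 0" using de by (simp add: fz0)
      finally have Xd: "Re (\<phi>d w) = inner d Fv" by simp
      have "(inner e Fv)\<^sup>2 + (inner d Fv)\<^sup>2 \<le> (norm Fv)\<^sup>2" by (rule bessel_ed[OF ne de nd])
      also have "\<dots> \<le> 1" using img[OF Mw] by (simp add: Fv_def abs_square_le_1 less_imp_le)
      finally show ?thesis using Xe Xd by simp
    qed
    have key: "(1+s\<^sup>2) * Re (u * deriv \<phi>e 0) + (1-s\<^sup>2) * Re (\<i> * u * deriv \<phi>d 0) \<le> 2*(1-s\<^sup>2)"
      by (rule key2d[OF hole hold e0 s0 s1 u bound])
    have s2: "1 - s\<^sup>2 > 0" using s0 s1 abs_square_less_1[of s] by simp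
    have kP: "k * inner e D \<le> 1 - s\<^sup>2"
    proof (cases "inner e D \<le> 0")
      case True
      then have "k * inner e D \<le> 0" using k0 by (simp add: mult_nonneg_nonpos)
      then show ?thesis using s2 by simp
    next
      case False
      have "(1-s\<^sup>2) * (k * inner e D) \<le> (1-s\<^sup>2) * (k * inner d Dp)"
        using PQ k0 s2 by (intro mult_left_mono) auto
      then have "(1+s\<^sup>2) * (k * inner e D) + (1-s\<^sup>2) * (k * inner e D) \<le> 2*(1-s\<^sup>2)"
        using key ReP ReQ by simp
      then show ?thesis by (simp add: algebra_simps)
    qed
    have "inner (f z0) D * k = s * (k * inner e D)" by (simp add: fz0)
    also have "\<dots> \<le> s * (1 - s\<^sup>2)" using kP s0 by (rule mult_left_mono)
    finally show ?thesis by (simp add: D_def k_def s_def)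
  qed
qed


lemma cmi_data:
  fixes f :: "complex \<Rightarrow> real^'n"
  assumes "conformal_minimal_immersion f (ball 0 1)"
  obtains fx fy H where
   "\<And>w. w \<in> ball 0 1 \<Longrightarrow> (f has_derivative (\<lambda>h. Re h *\<^sub>R fx w + Im h *\<^sub>R fy w)) (at w)"
   "\<And>w. w \<in> ball 0 1 \<Longrightarrow> inner (fx w) (fx w) = inner (fy w) (fy w)"
   "\<And>w. w \<in> ball 0 1 \<Longrightarrow> inner (fx w) (fy w) = 0"
   "\<And>i w. w \<in> ball 0 1 \<Longrightarrow> ((H::'n \<Rightarrow> complex \<Rightarrow> complex) i has_field_derivative (of_real (fx w $ i) - \<i> * of_real (fy w $ i))) (at w)"
   "\<And>i w. w \<in> ball 0 1 \<Longrightarrow> f w $ i = f 0 $ i + Re (H i w)"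
proof -
  obtain fx fy fxx fxy fyx fyy where
    A: "\<forall>z\<in>ball 0 1.
         (f has_derivative (\<lambda>h. Re h *\<^sub>R fx z + Im h *\<^sub>R fy z)) (at z) \<and>
         (fx has_derivative (\<lambda>h. Re h *\<^sub>R fxx z + Im h *\<^sub>R fxy z)) (at z) \<and>
         (fy has_derivative (\<lambda>h. Re h *\<^sub>R fyx z + Im h *\<^sub>R fyy z)) (at z) \<and>
         fxx z + fyy z = 0 \<and>
         inj (\<lambda>h. Re h *\<^sub>R fx z + Im h *\<^sub>R fy z) \<and>
         inner (fx z) (fx z) = inner (fy z) (fy z) \<and>
         inner (fx z) (fy z) = 0"
    and c1: "continuous_on (ball 0 1) fxy" and c2: "continuous_on (ball 0 1) fyx"
    using assms unfolding conformal_minimal_immersion_def by blast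
  have comp: "((\<lambda>z. g z $ i) has_derivative (\<lambda>h. Re h * a z $ i + Im h * b z $ i)) (at z)"
    if "(g has_derivative (\<lambda>h. Re h *\<^sub>R a z + Im h *\<^sub>R b z)) (at z)" for g a b :: "complex \<Rightarrow> real^'n" and i z
    using bounded_linear.has_derivative[OF bounded_linear_vec_nth[of i] that] by simp
  have "\<exists>Hi. (\<forall>w\<in>ball 0 1. (Hi has_field_derivative (of_real (fx w $ i) - \<i> * of_real (fy w $ i))) (at w))
          \<and> (\<forall>w\<in>ball 0 1. f w $ i = f 0 $ i + Re (Hi w))" for i
  proof -
    obtain Hi where "\<And>w. w\<in>ball 0 1 \<Longrightarrow> (Hi has_field_derivative (of_real (fx w $ i) - \<i> * of_real (fy w $ i))) (at w)"
      "\<And>w. w\<in>ball 0 1 \<Longrightarrow> f w $ i = f 0 $ i + Re (Hi w)"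
    proof (rule harm_primitive[of "ball 0 1" "\<lambda>z. f z $ i" "\<lambda>z. fx z $ i" "\<lambda>z. fy z $ i"
          "\<lambda>z. fxx z $ i" "\<lambda>z. fxy z $ i" "\<lambda>z. fyx z $ i" "\<lambda>z. fyy z $ i"])
      show "open (ball (0::complex) 1)" "convex (ball (0::complex) 1)" "(0::complex) \<in> ball 0 1" by auto
      show "((\<lambda>z. f z $ i) has_derivative (\<lambda>h. Re h * fx w $ i + Im h * fy w $ i)) (at w)"
        if "w \<in> ball 0 1" for w using comp A that by blast
      show "((\<lambda>z. fx z $ i) has_derivative (\<lambda>h. Re h * fxx w $ i + Im h * fxy w $ i)) (at w)"
        if "w \<in> ball 0 1" for w using comp A that by blast
      show "((\<lambda>z. fy z $ i) has_derivative (\<lambda>h. Re h * fyx w $ i + Im h * fyy w $ i)) (at w)"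
        if "w \<in> ball 0 1" for w using comp A that by blast
      show "continuous_on (ball 0 1) (\<lambda>z. fxy z $ i)" by (rule continuous_on_component[OF c1])
      show "continuous_on (ball 0 1) (\<lambda>z. fyx z $ i)" by (rule continuous_on_component[OF c2])
      show "fxx w $ i + fyy w $ i = 0" if "w \<in> ball 0 1" for w
      proof -
        have "fxx w + fyy w = 0" using A that by blast
        then show ?thesis by (metis vector_add_component zero_index)
      qed
    qed (rule that)
    then show ?thesis by blast
  qed
  then obtain H where H: "\<And>i. (\<forall>w\<in>ball 0 1. (H i has_field_derivative (of_real (fx w $ i) - \<i> * of_real (fy w $ i))) (at w))
          \<and> (\<forall>w\<in>ball 0 1. f w $ i = f 0 $ i + Re (H i w))"
    by metis
  show ?thesis
  proof (rule that[of fx fy H])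
    show "\<And>w. w \<in> ball 0 1 \<Longrightarrow> (f has_derivative (\<lambda>h. Re h *\<^sub>R fx w + Im h *\<^sub>R fy w)) (at w)"
      using A by blast
    show "\<And>w. w \<in> ball 0 1 \<Longrightarrow> inner (fx w) (fx w) = inner (fy w) (fy w)" using A by blast
    show "\<And>w. w \<in> ball 0 1 \<Longrightarrow> inner (fx w) (fy w) = 0" using A by blast
    show "\<And>i w. w \<in> ball 0 1 \<Longrightarrow> (H i has_field_derivative (of_real (fx w $ i) - \<i> * of_real (fy w $ i))) (at w)"
      using H by blast
    show "\<And>i w. w \<in> ball 0 1 \<Longrightarrow> f w $ i = f 0 $ i + Re (H i w)" using H by blast
  qed
qed


lemma artanh_nonneg: "0 \<le> x \<Longrightarrow> x < 1 \<Longrightarrow> artanh (x::real) \<ge> 0"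
  unfolding artanh_def by simp

lemma artanh_to_mobius:
  fixes x n0 A :: real
  assumes x: "0 \<le> x" "x < 1" and n: "0 \<le> n0" "n0 < 1" and A: "0 \<le> A" "A < 1"
    and le: "artanh x \<le> artanh n0 + artanh A"
  shows "x \<le> (A + n0) / (1 + A * n0)"
proof -
  have "ln ((1+x)/(1-x)) \<le> ln ((1+n0)/(1-n0)) + ln ((1+A)/(1-A))"
    using le unfolding artanh_def by simp
  also have "\<dots> = ln ((1+n0)/(1-n0) * ((1+A)/(1-A)))"
    by (rule ln_mult_pos[symmetric]) (use n A in auto)
  finally have "(1+x)/(1-x) \<le> (1+n0)/(1-n0) * ((1+A)/(1-A))"
    using x n A by (subst (asm) ln_le_cancel_iff) auto
  then have fr: "(1+x)/(1-x) \<le> ((1+n0)*(1+A))/((1-n0)*(1-A))" by simp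
  have bpos: "(1-x) * ((1-n0)*(1-A)) > 0" using x n A by simp
  have "(1+x)/(1-x) * ((1-x) * ((1-n0)*(1-A))) \<le> ((1+n0)*(1+A))/((1-n0)*(1-A)) * ((1-x) * ((1-n0)*(1-A)))"
    by (rule mult_right_mono[OF fr]) (use bpos in simp)
  then have "(1+x) * ((1-n0) * (1-A)) \<le> (1+n0) * (1+A) * (1-x)"
    using x n A by simp
  then have "x * (2 + 2 * A * n0) \<le> 2 * (A + n0)"
    by (simp add: algebra_simps)
  moreover have "x * (2 + 2 * A * n0) = 2 * (x * (1 + A * n0))" by (simp add: algebra_simps)
  ultimately have "2 * (x * (1 + A * n0)) \<le> 2 * (A + n0)" by simp
  then have "x * (1 + A * n0) \<le> A + n0" by simp
  moreover have "1 + A * n0 > 0" using n A by (simp add: add_pos_nonneg)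
  ultimately show ?thesis by (simp add: field_simps)
qed

lemma ode_compare:
  fixes \<rho> :: "real \<Rightarrow> real" and A n0 :: real
  assumes A: "0 < A" "A < 1"
   and cont: "continuous_on {0..1} \<rho>"
   and rng: "\<And>t. t\<in>{0..1} \<Longrightarrow> 0 \<le> \<rho> t \<and> \<rho> t < 1"
   and der: "\<And>t. 0 < t \<Longrightarrow> t < 1 \<Longrightarrow> \<rho> t \<noteq> 0 \<Longrightarrow>
       \<exists>D. (\<rho> has_real_derivative D) (at t) \<and> D * (1 - (t*A)\<^sup>2) \<le> A * (1 - (\<rho> t)\<^sup>2)"
  shows "artanh (\<rho> 1) \<le> artanh (\<rho> 0) + artanh A"
proof -
  define T where "T = {t\<in>{0..1}. \<rho> t = 0} \<union> {0}"
  have cT: "closed T" unfolding T_def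
    by (intro closed_Un continuous_closed_preimage_constant cont) auto
  have neT: "T \<noteq> {}" by (simp add: T_def)
  have bT: "bdd_above T" unfolding T_def by (rule bdd_aboveI[of _ 1]) auto
  define t0 where "t0 = Sup T"
  have t0T: "t0 \<in> T" unfolding t0_def by (rule closed_contains_Sup[OF neT bT cT])
  have t00: "0 \<le> t0" unfolding t0_def by (rule cSup_upper[OF _ bT]) (simp add: T_def)
  have t01: "t0 \<le> 1" unfolding t0_def by (rule cSup_least[OF neT]) (auto simp: T_def)
  have nz: "\<rho> t \<noteq> 0" if "t0 < t" "t \<le> 1" for t
  proof
    assume "\<rho> t = 0"
    then have "t \<in> T" using that t00 by (simp add: T_def)
    then have "t \<le> t0" unfolding t0_def by (rule cSup_upper[OF _ bT])
    then show False using that by simp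
  qed
  have tA: "\<bar>t * A\<bar> < 1" if "t \<in> {0..1}" for t
  proof -
    have h: "t * A \<le> A" using mult_right_mono[of t 1 A] that A by simp
    have h0: "0 \<le> t * A" using that A by simp
    show ?thesis using h h0 A by (subst abs_of_nonneg[OF h0]) linarith
  qed
  define k where "k t = artanh (\<rho> t) - artanh (t * A)" for t
  have kt0: "k t0 \<le> artanh (\<rho> 0)"
  proof (cases "t0 = 0")
    case True then show ?thesis by (simp add: k_def)
  next
    case False
    then have "\<rho> t0 = 0" using t0T by (simp add: T_def)
    moreover have "artanh (t0 * A) \<ge> 0" using t00 t01 A tA[of t0]
      by (intro artanh_nonneg) auto
    moreover have "artanh (\<rho> 0) \<ge> 0" using rng[of 0] by (intro artanh_nonneg) auto
    ultimately show ?thesis by (simp add: k_def)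
  qed
  have ck: "continuous_on {t0..1} k"
  proof -
    have r': "\<rho> t \<in> {-1<..<1}" if "t\<in>{0..1}" for t using rng[OF that] by auto
    have a': "t*A \<in> {-1<..<1}" if "t\<in>{0..1}" for t using tA[OF that] by (auto simp: abs_less_iff)
    have c2: "continuous_on {0..1} (\<lambda>t. t * A)" by (intro continuous_intros)
    have "continuous_on {0..1} k" unfolding k_def
      by (rule continuous_on_diff[OF continuous_on_artanh'[OF cont r'] continuous_on_artanh'[OF c2 a']])
    then show ?thesis by (rule continuous_on_subset) (use t00 in auto)
  qed
  have "k t0 \<ge> k 1"
  proof (rule DERIV_nonpos_imp_decreasing_open[OF t01 _ ck])
    fix t assume t: "t0 < t" "t < 1"
    have t01': "t \<in> {0..1}" using t t00 by auto
    obtain D where D: "(\<rho> has_real_derivative D) (at t)" and DL: "D * (1 - (t*A)\<^sup>2) \<le> A * (1 - (\<rho> t)\<^sup>2)"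
      using der[of t] nz[of t] t t00 by auto
    have r1: "\<bar>\<rho> t\<bar> < 1" using rng[OF t01'] by auto
    have d1: "((\<lambda>t. artanh (\<rho> t)) has_real_derivative (1 / (1 - (\<rho> t)\<^sup>2) * D)) (at t)"
      by (rule DERIV_chain2[OF artanh_real_has_field_derivative[OF r1] D])
    have d2: "((\<lambda>t. artanh (t * A)) has_real_derivative (1 / (1 - (t * A)\<^sup>2) * A)) (at t)"
      by (rule DERIV_chain2[where g="\<lambda>t. t * A" and x=t, OF artanh_real_has_field_derivative[OF tA[OF t01']]])
         (auto intro!: derivative_eq_intros)
    have p1: "1 - (\<rho> t)\<^sup>2 > 0" using r1 abs_square_less_1 by fastforce
    have p2: "1 - (t * A)\<^sup>2 > 0" using tA[OF t01'] abs_square_less_1 by fastforce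
    have q: "D * (1 - (t*A)\<^sup>2) / ((1 - (\<rho> t)\<^sup>2) * (1 - (t*A)\<^sup>2)) \<le> A * (1 - (\<rho> t)\<^sup>2) / ((1 - (\<rho> t)\<^sup>2) * (1 - (t*A)\<^sup>2))"
      by (rule divide_right_mono[OF DL]) (use p1 p2 in simp)
    have e1: "D * (1 - (t*A)\<^sup>2) / ((1 - (\<rho> t)\<^sup>2) * (1 - (t*A)\<^sup>2)) = 1 / (1 - (\<rho> t)\<^sup>2) * D"
      using p2 by simp
    have e2: "A * (1 - (\<rho> t)\<^sup>2) / ((1 - (\<rho> t)\<^sup>2) * (1 - (t*A)\<^sup>2)) = 1 / (1 - (t * A)\<^sup>2) * A"
      using p1 by simp
    have "1 / (1 - (\<rho> t)\<^sup>2) * D - 1 / (1 - (t * A)\<^sup>2) * A \<le> 0"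
      using q unfolding e1 e2 by simp
    then show "\<exists>y. (k has_real_derivative y) (at t) \<and> y \<le> 0"
      unfolding k_def[abs_def] using DERIV_diff[OF d1 d2] by blast
  qed
  then show ?thesis using kt0 by (simp add: k_def)
qed


theorem lemma3p1:
  fixes f :: "complex \<Rightarrow> real ^ 'n"
  assumes "CARD('n) \<ge> 3"
    and "conformal_minimal_immersion f (ball 0 1)"
    and "f ` ball 0 1 \<subseteq> ball 0 1"
    and "a \<in> ball 0 1"
  shows "norm (f a) \<le> (norm a + norm (f 0)) / (1 + norm a * norm (f 0))"
proof -
  obtain fx fy H where fd: "\<And>w. w \<in> ball 0 1 \<Longrightarrow> (f has_derivative (\<lambda>h. Re h *\<^sub>R fx w + Im h *\<^sub>R fy w)) (at w)"
    and c1: "\<And>w. w \<in> ball 0 1 \<Longrightarrow> inner (fx w) (fx w) = inner (fy w) (fy w)"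
    and c2: "\<And>w. w \<in> ball 0 1 \<Longrightarrow> inner (fx w) (fy w) = 0"
    and Hd: "\<And>i w. w \<in> ball 0 1 \<Longrightarrow> ((H::'n \<Rightarrow> complex \<Rightarrow> complex) i has_field_derivative (of_real (fx w $ i) - \<i> * of_real (fy w $ i))) (at w)"
    and fH: "\<And>i w. w \<in> ball 0 1 \<Longrightarrow> f w $ i = f 0 $ i + Re (H i w)"
    by (rule cmi_data[OF assms(2)]) (rule that)
  have img: "norm (f w) < 1" if "w \<in> ball 0 1" for w
  proof -
    have "f w \<in> ball 0 1" using assms(3) that by blast
    then show ?thesis by simp
  qed
  have pw: "inner (f z0) (Re u *\<^sub>R fx z0 + Im u *\<^sub>R fy z0) * (1 - (norm z0)\<^sup>2) \<le> norm (f z0) * (1 - (norm (f z0))\<^sup>2)"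
    if z0: "norm z0 < 1" and u: "norm u = 1" for z0 u
  proof -
    have z0b: "z0 \<in> ball 0 1" using z0 by simp
    show ?thesis
      by (rule pointwise[where H=H, OF Hd fH c1[OF z0b] c2[OF z0b] img z0 u])
  qed
  define A where "A = norm a"
  have A1: "A < 1" using assms(4) by (simp add: A_def)
  show ?thesis
  proof (cases "a = 0")
    case True
    then show ?thesis by simp
  next
    case False
    then have A0: "A > 0" by (simp add: A_def)
    define \<rho> where "\<rho> t = norm (f (of_real t * a))" for t
    have inb: "of_real t * a \<in> ball 0 1" if "t \<in> {0..1}" for t
    proof -
      have "norm (of_real t * a) = t * A" using that by (simp add: A_def norm_mult)
      also have "\<dots> \<le> A" using that A0 mult_right_mono[of t 1 A] by simp
      finally show ?thesis using A1 by simp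
    qed
    have fcont: "continuous_on (ball 0 1) f"
    proof (rule continuous_at_imp_continuous_on, intro ballI)
      fix w :: complex assume w: "w \<in> ball 0 1"
      show "isCont f w" by (rule has_derivative_continuous[OF fd[OF w]])
    qed
    have gcont: "continuous_on {0..1} (\<lambda>t::real. of_real t * a)" by (intro continuous_intros)
    have cont: "continuous_on {0..1} \<rho>"
    proof -
      have "continuous_on {0..1} (\<lambda>t. f (of_real t * a))"
        by (rule continuous_on_compose2[OF fcont gcont]) (use inb in auto)
      then show ?thesis unfolding \<rho>_def[abs_def] by (intro continuous_intros)
    qed
    have rng: "0 \<le> \<rho> t \<and> \<rho> t < 1" if "t\<in>{0..1}" for t
      using img[OF inb[OF that]] by (simp add: \<rho>_def)
    have der: "\<exists>D. (\<rho> has_real_derivative D) (at t) \<and> D * (1 - (t*A)\<^sup>2) \<le> A * (1 - (\<rho> t)\<^sup>2)"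
      if t: "0 < t" "t < 1" "\<rho> t \<noteq> 0" for t
    proof -
      define z0 where "z0 = of_real t * a"
      have z0b: "z0 \<in> ball 0 1" using inb[of t] t by (simp add: z0_def)
      have nz: "f z0 \<noteq> 0" using t(3) by (simp add: \<rho>_def z0_def)
      define Dv where "Dv = Re a *\<^sub>R fx z0 + Im a *\<^sub>R fy z0"
      have g: "((\<lambda>t. of_real t * a) has_derivative (\<lambda>h. of_real h * a)) (at t)"
        by (auto intro!: derivative_eq_intros)
      have "((\<lambda>t. f (of_real t * a)) has_derivative
          (\<lambda>h. Re (of_real h * a) *\<^sub>R fx z0 + Im (of_real h * a) *\<^sub>R fy z0)) (at t)"
        using has_derivative_compose[OF g fd[OF z0b, unfolded z0_def]] by (simp add: o_def z0_def)
      moreover have "(\<lambda>h. Re (of_real h * a) *\<^sub>R fx z0 + Im (of_real h * a) *\<^sub>R fy z0) = (\<lambda>h. h *\<^sub>R Dv)"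
        by (auto simp: Dv_def scaleR_add_right)
      ultimately have fg: "((\<lambda>t. f (of_real t * a)) has_derivative (\<lambda>h. h *\<^sub>R Dv)) (at t)" by simp
      have nd: "(norm has_derivative (\<lambda>h. inner h (sgn (f z0)))) (at (f z0))"
        by (rule has_derivative_norm[OF nz])
      have "(\<rho> has_derivative (\<lambda>h. inner (h *\<^sub>R Dv) (sgn (f z0)))) (at t)"
        using has_derivative_compose[OF fg nd[unfolded z0_def]] unfolding \<rho>_def[abs_def] z0_def
        by (simp add: o_def)
      moreover have "(\<lambda>h. inner (h *\<^sub>R Dv) (sgn (f z0))) = (*) (inner Dv (sgn (f z0)))"
        by (auto simp: mult.commute)
      ultimately have dr: "(\<rho> has_real_derivative (inner Dv (sgn (f z0)))) (at t)"
        unfolding has_field_derivative_def by simp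
      define u where "u = a / of_real A"
      have nu: "norm u = 1" using A0 by (simp add: u_def norm_divide A_def)
      have au: "a = of_real A * u" using A0 by (simp add: u_def)
      define Du where "Du = Re u *\<^sub>R fx z0 + Im u *\<^sub>R fy z0"
      have DvDu: "Dv = A *\<^sub>R Du" by (simp add: Dv_def Du_def au scaleR_add_right)
      have nz0: "norm z0 = t * A" using t by (simp add: z0_def norm_mult A_def)
      have rz: "\<rho> t = norm (f z0)" by (simp add: \<rho>_def z0_def)
      have rp: "\<rho> t > 0" using t(3) rng[of t] t by simp
      have P: "inner (f z0) Du * (1 - (t*A)\<^sup>2) \<le> \<rho> t * (1 - (\<rho> t)\<^sup>2)"
        using pw[OF _ nu, of z0] z0b nz0 rz by (simp add: Du_def)
      have "inner Dv (sgn (f z0)) = A * inner (f z0) Du / \<rho> t"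
        by (simp add: DvDu sgn_div_norm rz inner_commute divide_inverse mult.commute)
      then have "inner Dv (sgn (f z0)) * (1 - (t*A)\<^sup>2) = A / \<rho> t * (inner (f z0) Du * (1 - (t*A)\<^sup>2))"
        by simp
      also have "\<dots> \<le> A / \<rho> t * (\<rho> t * (1 - (\<rho> t)\<^sup>2))"
        by (rule mult_left_mono[OF P]) (use A0 rp in simp)
      also have "\<dots> = A * (1 - (\<rho> t)\<^sup>2)" using rp by simp
      finally show ?thesis using dr by blast
    qed
    have oc: "artanh (\<rho> 1) \<le> artanh (\<rho> 0) + artanh A"
      by (rule ode_compare[OF A0 A1 cont rng der])
    have r0: "\<rho> 0 = norm (f 0)" and r1: "\<rho> 1 = norm (f a)" by (simp_all add: \<rho>_def)
    have "norm (f a) \<le> (A + norm (f 0)) / (1 + A * norm (f 0))"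
    proof (rule artanh_to_mobius)
      show "0 \<le> norm (f a)" "norm (f a) < 1" using rng[of 1] r1 by auto
      show "0 \<le> norm (f 0)" "norm (f 0) < 1" using rng[of 0] r0 by auto
      show "0 \<le> A" "A < 1" using A0 A1 by auto
      show "artanh (norm (f a)) \<le> artanh (norm (f 0)) + artanh A" using oc r0 r1 by simp
    qed
    then show ?thesis by (simp add: A_def)
  qed
qed


end
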